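(* Let $t \in \mathbb{Q}_2$ with $|t - 1| \le 2^{-5}$ (i.e. $t \equiv 1 \pmod{32}$). Let $z \in \mathbb{Q}_2$ lie in $\overline{D}(\tfrac{19}{2}, 2^{-4})$ or in $\overline{D}(\tfrac{27}{2}, 2^{-4})$. Then the forward orbit of $z$ under $f_t$ is bounded.
   Context: Let $|\cdot|$ denote the $2$-adic absolute value on $\mathbb{C}_2$, normalized by $|2| = 1/2$. The notation $\overline{D}(a,\delta)$ denotes the closed disk $\{z \in \mathbb{C}_2 : |z-a| \le \delta\}$. For $t \in \mathbb{C}_2$, let $f_t(z) = -\tfrac32 t(-2z^3+3z^2)+1$. *)

theory Defs
  imports Complex_Main
begin

text \<open>An element of Z_2 is a compatible sequence of residues: x n is the residue
  of the 2-adic integer modulo 2^n, normalised to lie in [0, 2^n).\<close>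

definition z2_seqs :: "(nat \<Rightarrow> int) set" where
  "z2_seqs = {x. \<forall>n. 0 \<le> x n \<and> x n < 2 ^ n \<and> x (Suc n) mod 2 ^ n = x n}"

typedef Z2 = z2_seqs
  unfolding z2_seqs_def by (rule exI[of _ "\<lambda>_. 0"]) simp

definition z2_of_int :: "int \<Rightarrow> Z2" where
  "z2_of_int i = Abs_Z2 (\<lambda>n. i mod 2 ^ n)"

definition z2_add :: "Z2 \<Rightarrow> Z2 \<Rightarrow> Z2" where
  "z2_add a b = Abs_Z2 (\<lambda>n. (Rep_Z2 a n + Rep_Z2 b n) mod 2 ^ n)"

definition z2_mul :: "Z2 \<Rightarrow> Z2 \<Rightarrow> Z2" where
  "z2_mul a b = Abs_Z2 (\<lambda>n. (Rep_Z2 a n * Rep_Z2 b n) mod 2 ^ n)"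

definition z2_neg :: "Z2 \<Rightarrow> Z2" where
  "z2_neg a = Abs_Z2 (\<lambda>n. (- Rep_Z2 a n) mod 2 ^ n)"

text \<open>2-adic valuation of a nonzero 2-adic integer: the largest n with x = 0 mod 2^n.\<close>
definition z2_val :: "Z2 \<Rightarrow> nat" where
  "z2_val a = (LEAST n. Rep_Z2 a (Suc n) \<noteq> 0)"

text \<open>An element of Q_2 is represented by a pair (k, u) standing for u / 2^k with
  u in Z_2.  Every element of Q_2 has such representations (not unique); all
  notions below (arithmetic, absolute value) are compatible with this.\<close>

type_synonym Q2 = "nat \<times> Z2"

definition q2_of_int :: "int \<Rightarrow> Q2" where
  "q2_of_int i = (0, z2_of_int i)"

definition q2_dyadic :: "int \<Rightarrow> nat \<Rightarrow> Q2" where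
  "q2_dyadic a k = (k, z2_of_int a)"

fun q2_add :: "Q2 \<Rightarrow> Q2 \<Rightarrow> Q2" where
  "q2_add (k, u) (l, v) =
     (k + l, z2_add (z2_mul u (z2_of_int (2 ^ l))) (z2_mul v (z2_of_int (2 ^ k))))"

fun q2_mul :: "Q2 \<Rightarrow> Q2 \<Rightarrow> Q2" where
  "q2_mul (k, u) (l, v) = (k + l, z2_mul u v)"

fun q2_neg :: "Q2 \<Rightarrow> Q2" where
  "q2_neg (k, u) = (k, z2_neg u)"

definition q2_sub :: "Q2 \<Rightarrow> Q2 \<Rightarrow> Q2" where
  "q2_sub x y = q2_add x (q2_neg y)"

fun q2_abs :: "Q2 \<Rightarrow> real" where
  "q2_abs (k, u) =
     (if u = z2_of_int 0 then 0 else 2 powr (real k - real (z2_val u)))"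

definition q2_cdisk :: "Q2 \<Rightarrow> real \<Rightarrow> Q2 set" where
  "q2_cdisk a \<delta> = {z. q2_abs (q2_sub z a) \<le> \<delta>}"

definition f2 :: "Q2 \<Rightarrow> Q2 \<Rightarrow> Q2" where
  "f2 t z =
     q2_add
       (q2_mul (q2_neg (q2_dyadic 3 1))
          (q2_mul t
             (q2_add (q2_mul (q2_of_int (-2)) (q2_mul z (q2_mul z z)))
                     (q2_mul (q2_of_int 3) (q2_mul z z)))))
       (q2_of_int 1)"

end

theory Submission
  imports Defs
begin

lemma Rep_props: "0 \<le> Rep_Z2 u n" "Rep_Z2 u n < 2^n" "Rep_Z2 u (Suc n) mod 2^n = Rep_Z2 u n"
  using Rep_Z2[of u] unfolding z2_seqs_def by auto

lemma Rep_mod_self: "Rep_Z2 u n mod 2^n = Rep_Z2 u n"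
  using Rep_props[of u n] by simp

lemma Rep_mod: "n \<le> m \<Longrightarrow> Rep_Z2 u m mod 2^n = Rep_Z2 u n"
proof (induction m)
  case 0 then show ?case using Rep_mod_self[of u 0] by simp
next
  case (Suc m)
  show ?case
  proof (cases "n = Suc m")
    case True then show ?thesis using Rep_mod_self[of u "Suc m"] by simp
  next
    case False
    then have "n \<le> m" using Suc by simp
    have "Rep_Z2 u (Suc m) mod 2^n = (Rep_Z2 u (Suc m) mod 2^m) mod 2^n"
      using \<open>n \<le> m\<close> by (simp add: mod_mod_cancel le_imp_power_dvd)
    also have "\<dots> = Rep_Z2 u n" using Rep_props(3)[of u m] Suc.IH[OF \<open>n \<le> m\<close>] by simp
    finally show ?thesis .
  qed
qed

lemma Rep_Abs_mod:
  assumes "\<And>n. x (Suc n) mod 2^n = x n mod (2::int)^n"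
  shows "Rep_Z2 (Abs_Z2 (\<lambda>n. x n mod 2^n)) = (\<lambda>n. x n mod 2^n)"
proof (rule Abs_Z2_inverse)
  show "(\<lambda>n. x n mod 2 ^ n) \<in> z2_seqs" unfolding z2_seqs_def
  proof (intro CollectI allI conjI)
    fix n
    show "0 \<le> x n mod 2^n" by simp
    show "x n mod 2^n < 2^n" by simp
    have "(x (Suc n) mod 2 ^ Suc n) mod 2 ^ n = x (Suc n) mod 2^n"
      by (simp add: mod_mod_cancel le_imp_power_dvd)
    then show "x (Suc n) mod 2 ^ Suc n mod 2 ^ n = x n mod 2 ^ n" using assms by simp
  qed
qed

lemma Rep_of_int: "Rep_Z2 (z2_of_int i) n = i mod 2^n"
  unfolding z2_of_int_def
  by (subst Rep_Abs_mod) (auto simp: mod_mod_cancel le_imp_power_dvd)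

lemma Rep_add: "Rep_Z2 (z2_add a b) n = (Rep_Z2 a n + Rep_Z2 b n) mod 2^n"
proof -
  have "(Rep_Z2 a (Suc n) + Rep_Z2 b (Suc n)) mod 2^n = (Rep_Z2 a n + Rep_Z2 b n) mod 2^n" for n
    by (metis mod_add_eq Rep_props(3))
  from Rep_Abs_mod[OF this] show ?thesis unfolding z2_add_def by simp
qed

lemma Rep_mul: "Rep_Z2 (z2_mul a b) n = (Rep_Z2 a n * Rep_Z2 b n) mod 2^n"
proof -
  have "(Rep_Z2 a (Suc n) * Rep_Z2 b (Suc n)) mod 2^n = (Rep_Z2 a n * Rep_Z2 b n) mod 2^n" for n
    by (metis mod_mult_eq Rep_props(3))
  from Rep_Abs_mod[OF this] show ?thesis unfolding z2_mul_def by simp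
qed

lemma Rep_neg: "Rep_Z2 (z2_neg a) n = (- Rep_Z2 a n) mod 2^n"
proof -
  have "(- Rep_Z2 a (Suc n)) mod 2^n = (- Rep_Z2 a n) mod 2^n" for n
    by (metis mod_minus_eq Rep_props(3))
  from Rep_Abs_mod[OF this] show ?thesis unfolding z2_neg_def by simp
qed

lemma f2_eq: "f2 (kt, ut) (k, u) =
    (Suc (kt + (k + (k + k) + (k + k))),
     z2_add
      (z2_mul
        (z2_mul (z2_neg (z2_of_int 3))
          (z2_mul ut
            (z2_add
              (z2_mul (z2_mul (z2_of_int (- 2)) (z2_mul u (z2_mul u u)))
                (z2_of_int (2 ^ (k + k))))
              (z2_mul (z2_mul (z2_of_int 3) (z2_mul u u))
                (z2_of_int (2 ^ (k + (k + k))))))))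
        (z2_of_int 1))
      (z2_mul (z2_of_int 1)
        (z2_of_int (2 * 2 ^ (kt + (k + (k + k) + (k + k)))))))"
  unfolding f2_def q2_dyadic_def q2_of_int_def by simp

lemma f2_fst: "fst (f2 (kt, ut) (k, u)) = Suc (kt + 5*k)"
  by (simp add: f2_eq)

definition eqm :: "nat \<Rightarrow> int \<Rightarrow> int \<Rightarrow> bool" where
  "eqm n x y \<longleftrightarrow> x mod 2^n = y mod 2^n"

lemma eqm_add: "eqm n a a' \<Longrightarrow> eqm n b b' \<Longrightarrow> eqm n (a + b) (a' + b')"
  unfolding eqm_def by (metis mod_add_eq)
lemma eqm_mul: "eqm n a a' \<Longrightarrow> eqm n b b' \<Longrightarrow> eqm n (a * b) (a' * b')"
  unfolding eqm_def by (metis mod_mult_eq)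
lemma eqm_refl: "eqm n a a"
  unfolding eqm_def by simp

lemma eqmR_add: "eqm n (Rep_Z2 a n) A \<Longrightarrow> eqm n (Rep_Z2 b n) B \<Longrightarrow> eqm n (Rep_Z2 (z2_add a b) n) (A + B)"
  unfolding eqm_def Rep_add by (metis mod_add_eq mod_mod_trivial)
lemma eqmR_mul: "eqm n (Rep_Z2 a n) A \<Longrightarrow> eqm n (Rep_Z2 b n) B \<Longrightarrow> eqm n (Rep_Z2 (z2_mul a b) n) (A * B)"
  unfolding eqm_def Rep_mul by (metis mod_mult_eq mod_mod_trivial)
lemma eqmR_neg: "eqm n (Rep_Z2 a n) A \<Longrightarrow> eqm n (Rep_Z2 (z2_neg a) n) (- A)"
  unfolding eqm_def Rep_neg by (metis mod_minus_eq mod_mod_trivial)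
lemma eqmR_int: "eqm n (Rep_Z2 (z2_of_int i) n) i"
  unfolding eqm_def Rep_of_int by simp
lemma eqmR_base: "eqm n (Rep_Z2 u n) (Rep_Z2 u n)"
  by (rule eqm_refl)

definition Ef :: "nat \<Rightarrow> nat \<Rightarrow> int \<Rightarrow> int \<Rightarrow> int" where
  "Ef kt k x y = (- 3) * (y * ((- 2) * (x * (x * x)) * 2 ^ (k + k) + 3 * (x * x) * 2 ^ (k + (k + k)))) * 1
      + 1 * (2 * 2 ^ (kt + (k + (k + k) + (k + k))))"

lemma f2_snd: "Rep_Z2 (snd (f2 (kt, ut) (k, u))) n = Ef kt k (Rep_Z2 u n) (Rep_Z2 ut n) mod 2^n"
proof -
  have "eqm n (Rep_Z2 (snd (f2 (kt, ut) (k, u))) n) (Ef kt k (Rep_Z2 u n) (Rep_Z2 ut n))"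
    unfolding f2_eq snd_conv Ef_def
    by (intro eqmR_add eqmR_mul eqmR_neg eqmR_int eqmR_base)
  then show ?thesis unfolding eqm_def by (simp add: Rep_mod_self)
qed

lemma Ef_cong: "Ef kt k (x mod 2^n) (y mod 2^n) mod 2^n = Ef kt k x y mod 2^n"
proof -
  have x: "eqm n (x mod 2^n) x" and y: "eqm n (y mod 2^n) y" unfolding eqm_def by simp_all
  have "eqm n (Ef kt k (x mod 2^n) (y mod 2^n)) (Ef kt k x y)"
    unfolding Ef_def by (intro eqm_add eqm_mul x y eqm_refl)
  then show ?thesis unfolding eqm_def .
qed

definition Eg :: "int \<Rightarrow> int \<Rightarrow> int \<Rightarrow> int \<Rightarrow> int" where
  "Eg X P x y = - 3 * (y * (-2 * x^3 * X^2 + 3 * x^2 * X^3)) + 2 * P * X^5"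

lemma Ef_Eg: "Ef kt k x y = Eg (2^k) (2^kt) x y"
  unfolding Ef_def Eg_def power_add by algebra

lemma C1: "Eg (2*Y) P (Y*(19+32*a)) (P*(1+32*b)) = 2*P*(2*Y)^5*(3+4*(541 + 17328*b + 2907*a + 93024*a*b + 5184*a^2 + 165888*a^2*b + 3072*a^3 + 98304*a^3*b))"
  unfolding Eg_def by algebra

lemma C2: "Eg (2*Y) P (Y*(27+32*a)) (P*(1+32*b)) = 2*P*(2*Y)^5*(2+4*(1640 + 52488*b + 6075*a + 194400*a*b + 7488*a^2 + 239616*a^2*b + 3072*a^3 + 98304*a^3*b))"
  unfolding Eg_def by algebra

lemma C3: "Eg X P (X*(2+4*a)) (P*(1+32*b)) = 2*P*X^5*(3+4*(1 + 48*b + 18*a + 576*a*b + 54*a^2 + 1728*a^2*b + 48*a^3 + 1536*a^3*b))"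
  unfolding Eg_def by algebra

lemma C4: assumes "a^2 + a = 2*r"
  shows "Eg X P (X*(3+4*a)) (P*(1+32*b)) = P*X^5*(19+32*(2 + 81*b + 45*r - 9*a + 432*a*b + 720*a^2*b + 12*a^3 + 384*a^3*b))"
  using assms unfolding Eg_def by algebra

lemma Rep_zero: "Rep_Z2 (z2_of_int 0) n = 0"
  by (simp add: Rep_of_int)

lemma nonzero_ex: assumes "u \<noteq> z2_of_int 0" shows "\<exists>n. Rep_Z2 u (Suc n) \<noteq> 0"
proof (rule ccontr)
  assume "\<not> ?thesis"
  then have h: "\<And>n. Rep_Z2 u (Suc n) = 0" by blast
  have "Rep_Z2 u n = Rep_Z2 (z2_of_int 0) n" for n
  proof (cases n)
    case 0
    then show ?thesis using Rep_props(1,2)[of u 0] by (simp add: Rep_zero)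
  next
    case (Suc m) then show ?thesis using h by (simp add: Rep_zero)
  qed
  then have "Rep_Z2 u = Rep_Z2 (z2_of_int 0)" by blast
  then show False using assms Rep_Z2_inject by blast
qed

lemma val_zero: assumes "u \<noteq> z2_of_int 0" "j \<le> z2_val u" shows "Rep_Z2 u j = 0"
proof (cases j)
  case 0 then show ?thesis using Rep_props(1,2)[of u 0] by simp
next
  case (Suc i)
  then have "i < (LEAST n. Rep_Z2 u (Suc n) \<noteq> 0)" using assms(2) unfolding z2_val_def by simp
  then show ?thesis using not_less_Least Suc by blast
qed

lemma zero_val: assumes "u \<noteq> z2_of_int 0" "Rep_Z2 u j = 0" shows "j \<le> z2_val u"
proof (rule ccontr)
  assume "\<not> j \<le> z2_val u"
  then have lt: "z2_val u < j" by simp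
  have P: "Rep_Z2 u (Suc (z2_val u)) \<noteq> 0"
    unfolding z2_val_def using nonzero_ex[OF assms(1)] by (rule LeastI_ex)
  have "Rep_Z2 u (Suc (z2_val u)) = Rep_Z2 u j mod 2^(Suc (z2_val u))"
    using lt Rep_mod[of "Suc (z2_val u)" j u] by simp
  then show False using P assms(2) by simp
qed

lemma abs_le_res: assumes "q2_abs (k, w) \<le> 2 powr (- real m)" shows "Rep_Z2 w (k+m) = 0"
proof (cases "w = z2_of_int 0")
  case True then show ?thesis by (simp add: Rep_zero)
next
  case False
  then have "2 powr (real k - real (z2_val w)) \<le> 2 powr (- real m)" using assms by simp
  then have "real k - real (z2_val w) \<le> - real m" by simp
  then have "k + m \<le> z2_val w" by linarith
  then show ?thesis using val_zero False by blast
qed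

lemma res_abs: assumes "Rep_Z2 w j = 0" "k \<le> j + 1" shows "q2_abs (k, w) \<le> 2"
proof (cases "w = z2_of_int 0")
  case True then show ?thesis by simp
next
  case False
  then have "j \<le> z2_val w" using zero_val assms(1) by blast
  then have "real k - real (z2_val w) \<le> 1" using assms(2) by linarith
  then have "2 powr (real k - real (z2_val w)) \<le> 2 powr 1" by (rule powr_mono) simp
  then show ?thesis using False by simp
qed

lemma lift: assumes "Rep_Z2 u m = c" shows "\<exists>q. Rep_Z2 u n = (c + 2^m * q) mod 2^n"
proof (cases "n \<le> m")
  case True
  then show ?thesis using Rep_mod[OF True, of u] assms by (intro exI[of _ 0]) simp
next
  case False
  then have "Rep_Z2 u n mod 2^m = c" using Rep_mod[of m n u] assms by simp
  then have "Rep_Z2 u n = c + 2^m * (Rep_Z2 u n div 2^m)"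
    by (metis add.commute mult.commute mod_div_mult_eq)
  then show ?thesis using Rep_mod_self[of u n] by metis
qed

definition HH :: "int \<Rightarrow> nat \<Rightarrow> Z2 \<Rightarrow> bool" where
  "HH c k u \<longleftrightarrow> (\<exists>j. k = Suc j \<and> (\<forall>n. \<exists>a. Rep_Z2 u n = (2^j*(c+32*a)) mod 2^n))"
definition II :: "int \<Rightarrow> nat \<Rightarrow> Z2 \<Rightarrow> bool" where
  "II d k u \<longleftrightarrow> (\<forall>n. \<exists>a. Rep_Z2 u n = (2^k*(d+4*a)) mod 2^n)"
definition TT :: "nat \<Rightarrow> Z2 \<Rightarrow> bool" where
  "TT kt ut \<longleftrightarrow> (\<forall>n. \<exists>b. Rep_Z2 ut n = (2^kt*(1+32*b)) mod 2^n)"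

lemma eqm0: "eqm n (Rep_Z2 w n) A \<Longrightarrow> Rep_Z2 w n = 0 \<Longrightarrow> 2^n dvd A"
  unfolding eqm_def by (simp add: mod_eq_0_iff_dvd[symmetric])

lemma hyp_t: assumes "q2_abs (q2_sub (kt, ut) (q2_of_int 1)) \<le> 2 powr (-5)" shows "TT kt ut"
proof -
  define W where "W = z2_add (z2_mul ut (z2_of_int (2^0))) (z2_mul (z2_neg (z2_of_int 1)) (z2_of_int (2^kt)))"
  have "q2_sub (kt, ut) (q2_of_int 1) = (kt + 0, W)"
    unfolding W_def q2_sub_def q2_of_int_def q2_neg.simps q2_add.simps ..
  then have "q2_abs (kt, W) \<le> 2 powr (- real 5)" using assms by simp
  then have R0: "Rep_Z2 W (kt+5) = 0" by (rule abs_le_res)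
  have "eqm (kt+5) (Rep_Z2 W (kt+5)) (Rep_Z2 ut (kt+5) * 2^0 + (- 1) * 2^kt)"
    unfolding W_def by (intro eqmR_add eqmR_mul eqmR_neg eqmR_int eqmR_base)
  from eqm0[OF this R0] have "2^(kt+5) dvd Rep_Z2 ut (kt+5) - 2^kt" by simp
  then have m1: "Rep_Z2 ut (kt+5) mod 2^(kt+5) = 2^kt mod 2^(kt+5)"
    using mod_eq_dvd_iff by blast
  have "(2::int)^kt < 2^(kt+5)" by (simp add: power_strict_increasing)
  then have "(2::int)^kt mod 2^(kt+5) = 2^kt" by simp
  then have "Rep_Z2 ut (kt+5) = 2^kt" using m1 Rep_mod_self[of ut "kt+5"] by simp
  note L = lift[OF this]
  have "\<forall>n. \<exists>b. Rep_Z2 ut n = (2^kt*(1+32*b)) mod 2^n"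
  proof
    fix n
    obtain q where q: "Rep_Z2 ut n = (2^kt + 2^(kt+5)*q) mod 2^n" using L by blast
    have "(2::int)^kt + 2^(kt+5)*q = 2^kt*(1+32*q)" by (simp add: power_add algebra_simps)
    then show "\<exists>b. Rep_Z2 ut n = (2^kt*(1+32*b)) mod 2^n" using q by (intro exI[of _ q]) simp
  qed
  then show ?thesis unfolding TT_def by blast
qed

lemma hyp_z: assumes "q2_abs (q2_sub (k, u) (q2_dyadic c 1)) \<le> 2 powr (-4)" "odd c" "0 \<le> c" "c < 32"
  shows "HH c k u"
proof -
  define W where "W = z2_add (z2_mul u (z2_of_int (2^1))) (z2_mul (z2_neg (z2_of_int c)) (z2_of_int (2^k)))"
  have "q2_sub (k, u) (q2_dyadic c 1) = (k + 1, W)"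
    unfolding W_def q2_sub_def q2_dyadic_def q2_neg.simps q2_add.simps ..
  then have "q2_abs (Suc k, W) \<le> 2 powr (- real 4)" using assms by simp
  then have R00: "Rep_Z2 W (Suc k + 4) = 0" by (rule abs_le_res)
  have e: "Suc k + 4 = k + 5" by simp
  note R0 = R00[unfolded e]
  have "eqm (k + 5) (Rep_Z2 W (k + 5)) (Rep_Z2 u (k + 5) * 2^1 + (- c) * 2^k)"
    unfolding W_def by (intro eqmR_add eqmR_mul eqmR_neg eqmR_int eqmR_base)
  from eqm0[OF this R0] have dv: "2^(k+5) dvd (2 * Rep_Z2 u (k+5) - c * 2^k)" by (simp add: mult.commute)
  show ?thesis
  proof (cases k)
    case 0
    from dv have "32 dvd (2 * Rep_Z2 u 5 - c)" using 0 by simp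
    then have "2 dvd (2 * Rep_Z2 u 5 - c)" by (rule dvd_trans[rotated]) simp
    then have "even c" by simp
    then show ?thesis using assms(2) by simp
  next
    case (Suc j)
    have "2^(j+5) dvd (Rep_Z2 u (k+5) - c * 2^j)"
    proof -
      have e1: "(2::int)^(k+5) = 2 * 2^(j+5)" unfolding Suc by (simp only: add_Suc power_Suc)
      have e2: "2 * Rep_Z2 u (k+5) - c * 2^k = 2 * (Rep_Z2 u (k+5) - c * 2^j)" using Suc by (simp add: algebra_simps)
      have "2 * 2^(j+5) dvd 2 * (Rep_Z2 u (k+5) - c * 2^j)" using dv unfolding e1 e2 .
      then show ?thesis by (metis dvd_times_left_cancel_iff zero_neq_numeral)
    qed
    then have "Rep_Z2 u (k+5) mod 2^(j+5) = (c * 2^j) mod 2^(j+5)"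
      by (simp add: mod_eq_dvd_iff)
    moreover have "c * 2^j < 2^(j+5)" using assms(4) by (simp add: power_add)
    ultimately have "Rep_Z2 u (j+5) = c * 2^j" using Rep_mod[of "j+5" "k+5" u] Suc assms(3) by simp
    note L = lift[OF this]
    have "\<forall>n. \<exists>a. Rep_Z2 u n = (2^j*(c+32*a)) mod 2^n"
    proof
      fix n
      obtain q where q: "Rep_Z2 u n = (c * 2^j + 2^(j+5)*q) mod 2^n" using L by blast
      have "c * 2^j + 2^(j+5)*q = 2^j*(c+32*q)" by (simp add: power_add algebra_simps)
      then show "\<exists>a. Rep_Z2 u n = (2^j*(c+32*a)) mod 2^n" using q by (intro exI[of _ q]) simp
    qed
    then show ?thesis unfolding HH_def using Suc by blast
  qed
qed

lemma step_gen:
  assumes "\<And>n. \<exists>a b. Rep_Z2 u n = x a mod 2^n \<and> Rep_Z2 ut n = y b mod 2^n"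
    and "\<And>a b. \<exists>q. Ef kt k (x a) (y b) = g q"
  shows "\<exists>q. Rep_Z2 (snd (f2 (kt,ut) (k,u))) n = g q mod 2^n"
proof -
  obtain a b where ab: "Rep_Z2 u n = x a mod 2^n" "Rep_Z2 ut n = y b mod 2^n" using assms(1) by blast
  obtain q where "Ef kt k (x a) (y b) = g q" using assms(2) by blast
  then show ?thesis using ab Ef_cong[of kt k "x a" n "y b"] by (auto simp: f2_snd)
qed

lemma pow_K: "(2::int)^(Suc (kt + 5 * k)) = 2 * 2^kt * (2^k)^5"
  by (simp add: power_add power_mult[symmetric] mult_ac)

lemma step1: assumes "TT kt ut" "HH 19 k u" shows "II 3 (Suc (kt + 5*k)) (snd (f2 (kt,ut) (k,u)))"
proof -
  obtain j where j: "k = Suc j" "\<And>n. \<exists>a. Rep_Z2 u n = (2^j*(19+32*a)) mod 2^n"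
    using assms(2) unfolding HH_def by blast
  show ?thesis unfolding II_def
  proof
    fix n
    show "\<exists>q. Rep_Z2 (snd (f2 (kt,ut) (k,u))) n = (2^(Suc (kt + 5*k))*(3+4*q)) mod 2^n"
    proof (rule step_gen[where x="\<lambda>a. 2^j*(19+32*a)" and y="\<lambda>b. 2^kt*(1+32*b)"])
      show "\<exists>a b. Rep_Z2 u n = 2^j*(19+32*a) mod 2^n \<and> Rep_Z2 ut n = 2^kt*(1+32*b) mod 2^n" for n
      proof -
        obtain a where "Rep_Z2 u n = 2^j*(19+32*a) mod 2^n" using j(2) by blast
        moreover obtain b where "Rep_Z2 ut n = 2^kt*(1+32*b) mod 2^n" using assms(1) unfolding TT_def by blast
        ultimately show ?thesis by blast
      qed
      fix a b :: int
      have X2: "(2::int)^k = 2*2^j" using j(1) by simp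
      have P2: "(2::int)^(Suc (kt + 5*k)) = 2 * 2^kt * (2*2^j)^5" unfolding pow_K[of kt k] X2 by (rule refl)
      have "Ef kt k (2^j*(19+32*a)) (2^kt*(1+32*b)) = Eg (2^k) (2^kt) (2^j*(19+32*a)) (2^kt*(1+32*b))"
        by (rule Ef_Eg)
      also have "\<dots> = Eg (2*2^j) (2^kt) (2^j*(19+32*a)) (2^kt*(1+32*b))" by (simp only: X2)
      also have "\<dots> = 2 * 2^kt * (2*2^j)^5 * (3+4*(541 + 17328*b + 2907*a + 93024*a*b + 5184*a^2 + 165888*a^2*b + 3072*a^3 + 98304*a^3*b))" by (rule C1)
      also have "\<dots> = 2^(Suc (kt + 5*k)) * (3+4*(541 + 17328*b + 2907*a + 93024*a*b + 5184*a^2 + 165888*a^2*b + 3072*a^3 + 98304*a^3*b))" by (simp only: P2)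
      finally show "\<exists>q. Ef kt k (2^j*(19+32*a)) (2^kt*(1+32*b)) = 2^(Suc (kt + 5*k))*(3+4*q)" by (rule exI)
    qed
  qed
qed

lemma step2: assumes "TT kt ut" "HH 27 k u" shows "II 2 (Suc (kt + 5*k)) (snd (f2 (kt,ut) (k,u)))"
proof -
  obtain j where j: "k = Suc j" "\<And>n. \<exists>a. Rep_Z2 u n = (2^j*(27+32*a)) mod 2^n"
    using assms(2) unfolding HH_def by blast
  show ?thesis unfolding II_def
  proof
    fix n
    show "\<exists>q. Rep_Z2 (snd (f2 (kt,ut) (k,u))) n = (2^(Suc (kt + 5*k))*(2+4*q)) mod 2^n"
    proof (rule step_gen[where x="\<lambda>a. 2^j*(27+32*a)" and y="\<lambda>b. 2^kt*(1+32*b)"])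
      show "\<exists>a b. Rep_Z2 u n = 2^j*(27+32*a) mod 2^n \<and> Rep_Z2 ut n = 2^kt*(1+32*b) mod 2^n" for n
      proof -
        obtain a where "Rep_Z2 u n = 2^j*(27+32*a) mod 2^n" using j(2) by blast
        moreover obtain b where "Rep_Z2 ut n = 2^kt*(1+32*b) mod 2^n" using assms(1) unfolding TT_def by blast
        ultimately show ?thesis by blast
      qed
      fix a b :: int
      have X2: "(2::int)^k = 2*2^j" using j(1) by simp
      have P2: "(2::int)^(Suc (kt + 5*k)) = 2 * 2^kt * (2*2^j)^5" unfolding pow_K[of kt k] X2 by (rule refl)
      have "Ef kt k (2^j*(27+32*a)) (2^kt*(1+32*b)) = Eg (2^k) (2^kt) (2^j*(27+32*a)) (2^kt*(1+32*b))"
        by (rule Ef_Eg)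
      also have "\<dots> = Eg (2*2^j) (2^kt) (2^j*(27+32*a)) (2^kt*(1+32*b))" by (simp only: X2)
      also have "\<dots> = 2 * 2^kt * (2*2^j)^5 * (2+4*(1640 + 52488*b + 6075*a + 194400*a*b + 7488*a^2 + 239616*a^2*b + 3072*a^3 + 98304*a^3*b))" by (rule C2)
      also have "\<dots> = 2^(Suc (kt + 5*k)) * (2+4*(1640 + 52488*b + 6075*a + 194400*a*b + 7488*a^2 + 239616*a^2*b + 3072*a^3 + 98304*a^3*b))" by (simp only: P2)
      finally show "\<exists>q. Ef kt k (2^j*(27+32*a)) (2^kt*(1+32*b)) = 2^(Suc (kt + 5*k))*(2+4*q)" by (rule exI)
    qed
  qed
qed

lemma step3: assumes "TT kt ut" "II 2 k u" shows "II 3 (Suc (kt + 5*k)) (snd (f2 (kt,ut) (k,u)))"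
  unfolding II_def
proof
  fix n
  show "\<exists>q. Rep_Z2 (snd (f2 (kt,ut) (k,u))) n = (2^(Suc (kt + 5*k))*(3+4*q)) mod 2^n"
  proof (rule step_gen[where x="\<lambda>a. 2^k*(2+4*a)" and y="\<lambda>b. 2^kt*(1+32*b)"])
    show "\<exists>a b. Rep_Z2 u n = 2^k*(2+4*a) mod 2^n \<and> Rep_Z2 ut n = 2^kt*(1+32*b) mod 2^n" for n
    proof -
      obtain a where "Rep_Z2 u n = 2^k*(2+4*a) mod 2^n" using assms(2) unfolding II_def by blast
      moreover obtain b where "Rep_Z2 ut n = 2^kt*(1+32*b) mod 2^n" using assms(1) unfolding TT_def by blast
      ultimately show ?thesis by blast
    qed
    fix a b :: int
    have P2: "(2::int)^(Suc (kt + 5*k)) = 2 * 2^kt * (2^k)^5" by (rule pow_K)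
    have "Ef kt k (2^k*(2+4*a)) (2^kt*(1+32*b)) = Eg (2^k) (2^kt) (2^k*(2+4*a)) (2^kt*(1+32*b))"
      by (rule Ef_Eg)
    also have "\<dots> = 2 * 2^kt * (2^k)^5 * (3+4*(1 + 48*b + 18*a + 576*a*b + 54*a^2 + 1728*a^2*b + 48*a^3 + 1536*a^3*b))" by (rule C3)
    also have "\<dots> = 2^(Suc (kt + 5*k)) * (3+4*(1 + 48*b + 18*a + 576*a*b + 54*a^2 + 1728*a^2*b + 48*a^3 + 1536*a^3*b))" by (simp only: P2)
    finally show "\<exists>q. Ef kt k (2^k*(2+4*a)) (2^kt*(1+32*b)) = 2^(Suc (kt + 5*k))*(3+4*q)" by (rule exI)
  qed
qed

lemma even_sq: "even ((a::int)^2 + a)"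
  by (cases "even a") (auto simp: power2_eq_square)

lemma step4: assumes "TT kt ut" "II 3 k u" shows "HH 19 (Suc (kt + 5*k)) (snd (f2 (kt,ut) (k,u)))"
  unfolding HH_def
proof (rule exI[of _ "kt + 5*k"], rule conjI[OF refl], rule allI)
  fix n
  show "\<exists>q. Rep_Z2 (snd (f2 (kt,ut) (k,u))) n = (2^(kt + 5*k)*(19+32*q)) mod 2^n"
  proof (rule step_gen[where x="\<lambda>a. 2^k*(3+4*a)" and y="\<lambda>b. 2^kt*(1+32*b)"])
    show "\<exists>a b. Rep_Z2 u n = 2^k*(3+4*a) mod 2^n \<and> Rep_Z2 ut n = 2^kt*(1+32*b) mod 2^n" for n
    proof -
      obtain a where "Rep_Z2 u n = 2^k*(3+4*a) mod 2^n" using assms(2) unfolding II_def by blast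
      moreover obtain b where "Rep_Z2 ut n = 2^kt*(1+32*b) mod 2^n" using assms(1) unfolding TT_def by blast
      ultimately show ?thesis by blast
    qed
    fix a b :: int
    obtain r where r: "a^2 + a = 2*r" using even_sq[of a] by blast
    have e: "(2::int)^(kt + 5*k) = 2^kt * (2^k)^5" by (simp add: power_add power_mult[symmetric] mult_ac)
    have "Ef kt k (2^k*(3+4*a)) (2^kt*(1+32*b)) = Eg (2^k) (2^kt) (2^k*(3+4*a)) (2^kt*(1+32*b))"
      by (rule Ef_Eg)
    also have "\<dots> = 2^kt * (2^k)^5 * (19+32*(2 + 81*b + 45*r - 9*a + 432*a*b + 720*a^2*b + 12*a^3 + 384*a^3*b))" by (rule C4[OF r])
    also have "\<dots> = 2^(kt + 5*k) * (19+32*(2 + 81*b + 45*r - 9*a + 432*a*b + 720*a^2*b + 12*a^3 + 384*a^3*b))" by (simp only: e)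
    finally show "\<exists>q. Ef kt k (2^k*(3+4*a)) (2^kt*(1+32*b)) = 2^(kt + 5*k)*(19+32*q)" by (rule exI)
  qed
qed

definition SS :: "Q2 \<Rightarrow> bool" where
  "SS z \<longleftrightarrow> HH 19 (fst z) (snd z) \<or> HH 27 (fst z) (snd z) \<or> II 2 (fst z) (snd z) \<or> II 3 (fst z) (snd z)"

lemma S_step: assumes "TT kt ut" "SS z" shows "SS (f2 (kt,ut) z)"
proof -
  obtain k u where z: "z = (k,u)" by (cases z)
  from assms(2) have "HH 19 k u \<or> HH 27 k u \<or> II 2 k u \<or> II 3 k u" unfolding SS_def z fst_conv snd_conv .
  then show ?thesis unfolding SS_def z f2_fst
    using step1[OF assms(1)] step2[OF assms(1)] step3[OF assms(1)] step4[OF assms(1)] by blast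
qed

lemma HH_zero: assumes "HH c k u" shows "\<exists>j. Rep_Z2 u j = 0 \<and> k \<le> j + 1"
proof -
  obtain j where j: "k = Suc j" "\<And>n. \<exists>a. Rep_Z2 u n = (2^j*(c+32*a)) mod 2^n"
    using assms unfolding HH_def by blast
  obtain a where "Rep_Z2 u j = (2^j*(c+32*a)) mod 2^j" using j(2) by blast
  then have "Rep_Z2 u j = 0" by simp
  then show ?thesis using j(1) by (intro exI[of _ j]) simp
qed

lemma II_zero: assumes "II d k u" shows "\<exists>j. Rep_Z2 u j = 0 \<and> k \<le> j + 1"
proof -
  obtain a where "Rep_Z2 u k = (2^k*(d+4*a)) mod 2^k" using assms unfolding II_def by blast
  then have "Rep_Z2 u k = 0" by simp
  then show ?thesis by (intro exI[of _ k]) simp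
qed

lemma S_bound: assumes "SS z" shows "q2_abs z \<le> 2"
proof -
  obtain k u where z: "z = (k,u)" by (cases z)
  from assms have "HH 19 k u \<or> HH 27 k u \<or> II 2 k u \<or> II 3 k u" unfolding SS_def z fst_conv snd_conv .
  then obtain j where "Rep_Z2 u j = 0" "k \<le> j + 1" using HH_zero II_zero by blast
  then show ?thesis unfolding z by (rule res_abs)
qed

theorem mainTheorem6:
  fixes t z :: Q2
  assumes "q2_abs (q2_sub t (q2_of_int 1)) \<le> 2 powr (-5)"
    and "z \<in> q2_cdisk (q2_dyadic 19 1) (2 powr (-4)) \<or> z \<in> q2_cdisk (q2_dyadic 27 1) (2 powr (-4))"
  shows "\<exists>B. \<forall>n. q2_abs ((f2 t ^^ n) z) \<le> B"
proof -
  obtain kt ut where t: "t = (kt, ut)" by (cases t)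
  obtain k u where z: "z = (k, u)" by (cases z)
  have T: "TT kt ut" using assms(1) unfolding t by (rule hyp_t)
  have "HH 19 k u \<or> HH 27 k u"
  proof (rule disjE[OF assms(2)])
    assume "z \<in> q2_cdisk (q2_dyadic 19 1) (2 powr (-4))"
    then have "q2_abs (q2_sub (k,u) (q2_dyadic 19 1)) \<le> 2 powr (-4)" unfolding q2_cdisk_def z by (rule CollectD)
    then have "HH 19 k u" by (rule hyp_z) simp_all
    then show ?thesis ..
  next
    assume "z \<in> q2_cdisk (q2_dyadic 27 1) (2 powr (-4))"
    then have "q2_abs (q2_sub (k,u) (q2_dyadic 27 1)) \<le> 2 powr (-4)" unfolding q2_cdisk_def z by (rule CollectD)
    then have "HH 27 k u" by (rule hyp_z) simp_all
    then show ?thesis ..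
  qed
  then have S0: "SS z" unfolding SS_def z fst_conv snd_conv by blast
  have "SS ((f2 t ^^ n) z)" for n
  proof (induction n)
    case 0 then show ?case using S0 by simp
  next
    case (Suc n) then show ?case unfolding t funpow.simps comp_def by (rule S_step[OF T])
  qed
  then show ?thesis using S_bound by blast
qed

end
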